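(* For every positive integer $n$, the poset $\widetilde\Pi(D_n)$ is a lattice.
   Context: For a positive integer $n$, $D_n=\langle r,s\mid r^n=e,\ s^2=e,\ srs^{-1}=r^{-1}\rangle$ is the dihedral group of order $2n$. For a finite group $G$ and a subgroup $H\le G$, let $\pi_e(H)=\{o(x)\mid x\in H\}$. Let $\mathcal{L}(G)$ be the set of subgroups of $G$; define $H_1\equiv H_2$ iff $\pi_e(H_1)=\pi_e(H_2)$, with class $[H]$. The poset $\widetilde\Pi(G)$ is $\mathcal{L}(G)/\!\equiv$ ordered by $[H_1]\lesssim[H_2]$ iff $\pi_e(H_1)\subseteq\pi_e(H_2)$. *)

theory Defs
  imports "HOL-Algebra.Algebra"
begin

text \<open>Concrete model of the dihedral group D_n of order 2n: the pair (k, b) stands for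
  r^k s^b with 0 \<le> k < n. Using s r^c = r^(-c) s, we get
  r^a s^b \<cdot> r^c s^d = r^(a + (-1)^b c) s^(b+d).\<close>

definition dihedral :: "nat \<Rightarrow> (nat \<times> bool) monoid" where
  "dihedral n = \<lparr> carrier = {0..<n} \<times> UNIV,
     monoid.mult = (\<lambda>(a, b) (c, d). ((if b then a + (n - c) else a + c) mod n, b \<noteq> d)),
     monoid.one = (0, False) \<rparr>"

definition elem_orders :: "('a, 'b) monoid_scheme \<Rightarrow> 'a set \<Rightarrow> nat set" where
  "elem_orders G H = group.ord G ` H"

definition pe_class :: "('a, 'b) monoid_scheme \<Rightarrow> 'a set \<Rightarrow> 'a set set" where
  "pe_class G H = {K. subgroup K G \<and> elem_orders G K = elem_orders G H}"

definition Pi_tilde :: "('a, 'b) monoid_scheme \<Rightarrow> 'a set set gorder" where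
  "Pi_tilde G = \<lparr> carrier = {pe_class G H | H. subgroup H G},
     eq = (=),
     le = (\<lambda>A B. \<exists>H\<in>A. \<exists>K\<in>B. elem_orders G H \<subseteq> elem_orders G K) \<rparr>"

end

theory Submission
  imports Defs
begin


lemma lattice_generic:
  assumes grp: "group G" and fin: "finite (carrier G)"
  and inter: "\<And>H K. subgroup H G \<Longrightarrow> subgroup K G \<Longrightarrow>
      \<exists>L. subgroup L G \<and> elem_orders G L = elem_orders G H \<inter> elem_orders G K"
  shows "lattice (Pi_tilde G)"
proof -
  let ?P = "Pi_tilde G"
  let ?e = "elem_orders G"
  have car: "carrier ?P = {pe_class G H | H. subgroup H G}"
    by (simp add: Pi_tilde_def)
  have mem: "H \<in> pe_class G H" if "subgroup H G" for H
    using that by (simp add: pe_class_def)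
  have le: "(pe_class G H \<sqsubseteq>\<^bsub>?P\<^esub> pe_class G K) = (?e H \<subseteq> ?e K)"
    if "subgroup H G" "subgroup K G" for H K
    using that by (auto simp: Pi_tilde_def pe_class_def)
  have eqc: "(pe_class G H = pe_class G K) = (?e H = ?e K)"
    if "subgroup H G" "subgroup K G" for H K
    using that mem by (auto simp: pe_class_def)
  have finE: "finite (?e H)" if "subgroup H G" for H
    using that fin unfolding elem_orders_def
    by (meson finite_imageI rev_finite_subset subgroup.subset)
  have eqP: "(x .=\<^bsub>?P\<^esub> y) = (x = y)" for x y by (simp add: Pi_tilde_def)
  have po: "partial_order ?P"
  proof (unfold_locales, goal_cases)
    case (1 x) then show ?case by (simp add: Pi_tilde_def)
  next
    case (2 x y) then show ?case by (simp add: Pi_tilde_def)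
  next
    case (3 x y z) then show ?case by (simp add: Pi_tilde_def)
  next
    case (4 x) then show ?case using le by (auto simp: car)
  next
    case (5 x y)
    then obtain H K where "subgroup H G" "x = pe_class G H" "subgroup K G" "y = pe_class G K"
      by (auto simp: car)
    then show ?case using 5 le eqc eqP by (metis subset_antisym)
  next
    case (6 x y z) then show ?case using le by (auto simp: car)
  next
    case (7 x y z w) then show ?case by (simp add: Pi_tilde_def)
  next
    case 8 then show ?case by (simp add: Pi_tilde_def)
  qed
  have sup: "\<exists>s. least ?P s (Upper ?P {x, y})" if xy: "x \<in> carrier ?P" "y \<in> carrier ?P" for x y
  proof -
    obtain H K where H: "subgroup H G" "x = pe_class G H" and K: "subgroup K G" "y = pe_class G K"
      using xy car by auto
    define U where "U = {M. subgroup M G \<and> ?e H \<union> ?e K \<subseteq> ?e M}"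
    have "carrier G \<in> U" unfolding U_def elem_orders_def
      using H K grp group.subgroup_self subgroup.subset by blast
    then obtain M where M: "M \<in> U" and Mmin: "\<And>M'. M' \<in> U \<Longrightarrow> card (?e M) \<le> card (?e M')"
      using ex_has_least_nat[of "\<lambda>M. M \<in> U" _ "\<lambda>M. card (?e M)"] by blast
    have Mle: "?e M \<subseteq> ?e M'" if M'U: "M' \<in> U" for M'
    proof -
      obtain L where L: "subgroup L G" "?e L = ?e M \<inter> ?e M'"
        using inter M M'U U_def by blast
      then have "L \<in> U" using M M'U by (auto simp: U_def)
      then have "card (?e M) \<le> card (?e L)" using Mmin by blast
      moreover have "finite (?e M)" using M finE U_def by blast
      ultimately have "?e L = ?e M" using L(2)
        by (metis card_seteq inf_le1)
      then show ?thesis using L by blast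
    qed
    show ?thesis
    proof (intro exI)
      have cM: "pe_class G M \<in> carrier ?P" using M by (auto simp: car U_def)
      have xc: "x \<in> carrier ?P" "y \<in> carrier ?P" using xy by auto
      have "pe_class G M \<in> Upper ?P {x, y}"
      proof (rule Upper_memI)
        fix z assume "z \<in> {x, y}"
        then show "z \<sqsubseteq>\<^bsub>?P\<^esub> pe_class G M"
          using M H K le unfolding U_def by auto
      qed (rule cM)
      moreover have "pe_class G M \<sqsubseteq>\<^bsub>?P\<^esub> z" if z: "z \<in> Upper ?P {x, y}" for z
      proof -
        have zc: "z \<in> carrier ?P" and zx: "x \<sqsubseteq>\<^bsub>?P\<^esub> z" and zy: "y \<sqsubseteq>\<^bsub>?P\<^esub> z"
          using z xc unfolding Upper_def by auto
        obtain M' where M': "subgroup M' G" "z = pe_class G M'" using zc car by auto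
        have "M' \<in> U" using zx zy M' H K le unfolding U_def by auto
        then show ?thesis using Mle le M' M U_def by auto
      qed
      ultimately show "least ?P (pe_class G M) (Upper ?P {x, y})"
        unfolding least_def by (auto simp: Upper_def)
    qed
  qed
  have inf: "\<exists>s. greatest ?P s (Lower ?P {x, y})" if xy: "x \<in> carrier ?P" "y \<in> carrier ?P" for x y
  proof -
    obtain H K where H: "subgroup H G" "x = pe_class G H" and K: "subgroup K G" "y = pe_class G K"
      using xy car by auto
    obtain L where L: "subgroup L G" "?e L = ?e H \<inter> ?e K"
      using inter H K by blast
    show ?thesis
    proof (intro exI)
      have cL: "pe_class G L \<in> carrier ?P" using L by (auto simp: car)
      have xc: "x \<in> carrier ?P" "y \<in> carrier ?P" using xy by auto
      have "pe_class G L \<in> Lower ?P {x, y}"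
        unfolding Lower_def using cL L H K le by auto
      moreover have "z \<sqsubseteq>\<^bsub>?P\<^esub> pe_class G L" if z: "z \<in> Lower ?P {x, y}" for z
      proof -
        have zc: "z \<in> carrier ?P" and zx: "z \<sqsubseteq>\<^bsub>?P\<^esub> x" and zy: "z \<sqsubseteq>\<^bsub>?P\<^esub> y"
          using z xc unfolding Lower_def by auto
        obtain M' where M': "subgroup M' G" "z = pe_class G M'" using zc car by auto
        show ?thesis using zx zy M' H K L le by auto
      qed
      ultimately show "greatest ?P (pe_class G L) (Lower ?P {x, y})"
        unfolding greatest_def by (auto simp: Lower_def)
    qed
  qed
  show ?thesis
    using po sup inf
    by (simp add: lattice_def upper_semilattice_def upper_semilattice_axioms_def
        lower_semilattice_def lower_semilattice_axioms_def)
qed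



definition dm :: "nat \<Rightarrow> bool \<Rightarrow> nat \<Rightarrow> nat \<Rightarrow> nat" where
  "dm n b a c = (if b then a + (n - c) else a + c) mod n"

lemma dih_mult: "(a, b) \<otimes>\<^bsub>dihedral n\<^esub> (c, d) = (dm n b a c, b \<noteq> d)"
  by (simp add: dihedral_def dm_def)

lemma dih_one: "\<one>\<^bsub>dihedral n\<^esub> = (0, False)"
  by (simp add: dihedral_def)

lemma dih_carrier: "carrier (dihedral n) = {0..<n} \<times> UNIV"
  by (simp add: dihedral_def)

lemma dm_int: "c \<le> n \<Longrightarrow> int (dm n b a c) = (int a + (if b then - int c else int c)) mod int n"
proof -
  assume c: "c \<le> n"
  show ?thesis
  proof (cases b)
    case True
    have "int (dm n b a c) = int (a + (n - c)) mod int n" by (simp add: dm_def True zmod_int)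
    also have "\<dots> = (int a - int c + int n) mod int n" using c by (simp add: of_nat_diff algebra_simps)
    also have "\<dots> = (int a - int c) mod int n" by (simp only: mod_add_self2)
    finally show ?thesis using True by simp
  next
    case False
    then show ?thesis by (simp add: dm_def zmod_int)
  qed
qed

lemma dm_less: "n > 0 \<Longrightarrow> dm n b a c < n"
  by (simp add: dm_def)

lemma dm_assoc:
  assumes "n > 0" "c < n" "e < n"
  shows "dm n (b \<noteq> d) (dm n b a c) e = dm n b a (dm n d c e)"
proof -
  have "int (dm n (b \<noteq> d) (dm n b a c) e) = int (dm n b a (dm n d c e))"
    using assms dm_less[of n]
    apply (simp add: dm_int less_imp_le)
    apply (cases b; cases d; simp add: mod_simps algebra_simps)
    done
  then show ?thesis by simp
qed

lemma dihedral_group: assumes "n \<ge> 1" shows "group (dihedral n)"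
proof (rule groupI)
  have n: "n > 0" using assms by simp
  show "\<one>\<^bsub>dihedral n\<^esub> \<in> carrier (dihedral n)" using n by (simp add: dih_one dih_carrier)
  show "x \<otimes>\<^bsub>dihedral n\<^esub> y \<in> carrier (dihedral n)"
    if "x \<in> carrier (dihedral n)" "y \<in> carrier (dihedral n)" for x y
    using n by (cases x; cases y) (simp add: dih_mult dih_carrier dm_less)
  show "x \<otimes>\<^bsub>dihedral n\<^esub> y \<otimes>\<^bsub>dihedral n\<^esub> z = x \<otimes>\<^bsub>dihedral n\<^esub> (y \<otimes>\<^bsub>dihedral n\<^esub> z)"
    if "x \<in> carrier (dihedral n)" "y \<in> carrier (dihedral n)" "z \<in> carrier (dihedral n)" for x y z
  proof -
    obtain a b c d e f where xyz: "x = (a, b)" "y = (c, d)" "z = (e, f)" by (cases x; cases y; cases z) auto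
    have "c < n" "e < n" using that xyz by (auto simp: dih_carrier)
    then have "dm n (b \<noteq> d) (dm n b a c) e = dm n b a (dm n d c e)" using n dm_assoc by blast
    then show ?thesis unfolding xyz dih_mult by auto
  qed
  show "\<one>\<^bsub>dihedral n\<^esub> \<otimes>\<^bsub>dihedral n\<^esub> x = x" if "x \<in> carrier (dihedral n)" for x
    using that by (cases x) (simp add: dih_mult dih_one dih_carrier dm_def)
  show "\<exists>y\<in>carrier (dihedral n). y \<otimes>\<^bsub>dihedral n\<^esub> x = \<one>\<^bsub>dihedral n\<^esub>"
    if "x \<in> carrier (dihedral n)" for x
  proof (cases x)
    case (Pair a b)
    show ?thesis
    proof (cases b)
      case True
      then show ?thesis using that Pair
        by (intro bexI[of _ "(a, True)"]) (auto simp: dih_mult dih_one dih_carrier dm_def)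
    next
      case False
      have "((n - a) mod n + a) mod n = 0" using that Pair n
        by (simp add: dih_carrier) (metis add.commute le_add_diff_inverse less_imp_le mod_add_left_eq mod_self)
      then show ?thesis using that Pair False n
        by (intro bexI[of _ "((n - a) mod n, False)"]) (auto simp: dih_mult dih_one dih_carrier dm_def)
    qed
  qed
qed



lemma set_aux1:
  fixes P Q U V :: "nat set"
  assumes "P \<subseteq> {t}" "Q \<subseteq> {t}" "t \<in> (U \<union> P) \<inter> (V \<union> Q)"
  shows "U \<inter> V \<union> {t} = (U \<union> P) \<inter> (V \<union> Q)"
  using assms by blast

lemma set_aux2:
  fixes P Q U V :: "nat set"
  assumes "P \<subseteq> {t}" "Q \<subseteq> {t}" "t \<notin> (U \<union> P) \<inter> (V \<union> Q)"
  shows "(U \<union> P) \<inter> (V \<union> Q) = U \<inter> V"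
  using assms by blast

context
  fixes n :: nat
  assumes n1: "n \<ge> 1"
begin

interpretation G: group "dihedral n" by (rule dihedral_group[OF n1])

lemma npos: "n > 0" using n1 by simp

lemma sub_pow: "subgroup H (dihedral n) \<Longrightarrow> h \<in> H \<Longrightarrow> h [^]\<^bsub>dihedral n\<^esub> (j::nat) \<in> H"
  by (induction j) (auto simp: subgroup.one_closed subgroup.m_closed)

lemma rot_pow: "a < n \<Longrightarrow> (a, False) [^]\<^bsub>dihedral n\<^esub> (j::nat) = ((j * a) mod n, False)"
proof (induction j)
  case 0 then show ?case by (simp add: dih_one)
next
  case (Suc j)
  then show ?case by (simp add: dih_mult dm_def mod_simps add.commute)
qed

lemma rot_ord_dvd: "a < n \<Longrightarrow> (G.ord (a, False) dvd m) = (n dvd m * a)"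
proof -
  assume a: "a < n"
  have "(G.ord (a, False) dvd m) = ((a, False) [^]\<^bsub>dihedral n\<^esub> m = \<one>\<^bsub>dihedral n\<^esub>)"
    using a by (simp add: G.pow_eq_id dih_carrier)
  also have "\<dots> = (n dvd m * a)" using a by (simp add: rot_pow dih_one dvd_eq_mod_eq_0)
  finally show ?thesis .
qed

lemma refl_ord: "a < n \<Longrightarrow> G.ord (a, True) = 2"
proof -
  assume a: "a < n"
  have c: "(a, True) \<in> carrier (dihedral n)" using a by (simp add: dih_carrier)
  have "(a, True) [^]\<^bsub>dihedral n\<^esub> (2::nat) = \<one>\<^bsub>dihedral n\<^esub>"
    using a by (simp add: numeral_2_eq_2 dih_mult dih_one dm_def)
  then have d: "G.ord (a, True) dvd 2" using c G.pow_eq_id by blast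
  have "G.ord (a, True) \<noteq> 1" using c G.ord_eq_1 by (simp add: dih_one)
  moreover have "G.ord (a, True) \<noteq> 0" using d by (metis dvd_0_left_iff zero_neq_numeral)
  moreover have "G.ord (a, True) \<le> 2" using d by (rule dvd_imp_le) simp
  ultimately show ?thesis by linarith
qed

lemma rot_unique:
  assumes a: "a < n" and b: "b < n" and eq: "G.ord (a, False) = G.ord (b, False)"
  shows "\<exists>j. (a, False) = (b, False) [^]\<^bsub>dihedral n\<^esub> (j::nat)"
proof -
  have iff: "\<And>m. (n dvd m * a) = (n dvd m * b)"
    using rot_ord_dvd[OF a] rot_ord_dvd[OF b] eq by metis
  define g where "g = gcd b n"
  have gpos: "g > 0" using npos g_def by simp
  have "n dvd (n div g) * b"
  proof -
    have "(n div g) * b = n * (b div g)"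
      by (metis g_def dvd_div_mult gcd_dvd1 gcd_dvd2 mult.commute dvd_mult_div_cancel)
    then show ?thesis by simp
  qed
  then have "n dvd (n div g) * a" using iff by blast
  moreover have "n = (n div g) * g" by (simp add: g_def)
  ultimately have "(n div g) * g dvd (n div g) * a" by simp
  moreover have "n div g > 0" using npos gpos g_def
    by (metis dvd_div_eq_0_iff gcd_dvd2 gr0I less_not_refl2)
  ultimately have "g dvd a" by simp
  then obtain t where t: "a = g * t" by blast
  show ?thesis
  proof (cases "b = 0")
    case True
    then have "g = n" by (simp add: g_def)
    then have "a = 0" using t a by (metis mult_less_cancel1 nat_mult_1_right not_less_zero less_one mult_0_right)
    then show ?thesis using True by (intro exI[of _ 0]) (simp add: dih_one)
  next
    case False
    then obtain x y where xy: "b * x = n * y + g" using bezout_nat[of b n] g_def by blast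
    have "(t * x * b) mod n = a mod n"
    proof -
      have "t * x * b = t * (b * x)" by simp
      also have "\<dots> = t * (n * y + g)" using xy by simp
      also have "\<dots> = n * (y * t) + a" using t by (simp add: algebra_simps)
      finally have "t * x * b = n * (y * t) + a" .
      then show ?thesis by simp
    qed
    then have "((t * x) * b) mod n = a" using a by simp
    then show ?thesis using b by (intro exI[of _ "t * x"]) (simp add: rot_pow)
  qed
qed


lemma inv_rot: "a < n \<Longrightarrow> inv\<^bsub>dihedral n\<^esub> (a, False) = ((n - a) mod n, False)"
proof -
  assume a: "a < n"
  have "((n - a) mod n + a) mod n = 0" using a
    by (metis add.commute le_add_diff_inverse less_imp_le mod_add_left_eq mod_self)
  then show ?thesis using a npos
    by (intro G.inv_equality) (auto simp: dih_mult dih_one dih_carrier dm_def)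
qed

lemma inv_refl: "a < n \<Longrightarrow> inv\<^bsub>dihedral n\<^esub> (a, True) = (a, True)"
  using npos by (intro G.inv_equality) (auto simp: dih_mult dih_one dih_carrier dm_def)

lemma eo_char:
  assumes H: "subgroup H (dihedral n)"
  shows "elem_orders (dihedral n) H = G.ord ` {x\<in>H. \<not> snd x} \<union> (if \<exists>x\<in>H. snd x then {2} else {})"
proof -
  have sub: "H \<subseteq> {0..<n} \<times> UNIV" using subgroup.subset[OF H] by (simp add: dih_carrier)
  have r: "G.ord x = 2" if "x \<in> H" "snd x" for x
    using that sub refl_ord by (cases x) auto
  show ?thesis unfolding elem_orders_def
  proof (intro equalityI subsetI)
    fix z assume "z \<in> G.ord ` H"
    then obtain x where "x \<in> H" "z = G.ord x" by blast
    then show "z \<in> G.ord ` {x\<in>H. \<not> snd x} \<union> (if \<exists>x\<in>H. snd x then {2} else {})"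
      using r by (cases "snd x") auto
  next
    fix z assume "z \<in> G.ord ` {x\<in>H. \<not> snd x} \<union> (if \<exists>x\<in>H. snd x then {2} else {})"
    then show "z \<in> G.ord ` H" using r by (auto split: if_splits) (metis image_eqI)
  qed
qed

lemma rot_sub:
  assumes H: "subgroup H (dihedral n)" and K: "subgroup K (dihedral n)"
  shows "subgroup {x\<in>H \<inter> K. \<not> snd x} (dihedral n)"
proof (rule G.subgroupI)
  show "{x\<in>H \<inter> K. \<not> snd x} \<subseteq> carrier (dihedral n)" using subgroup.subset[OF H] by auto
  show "{x\<in>H \<inter> K. \<not> snd x} \<noteq> {}"
    using subgroup.one_closed[OF H] subgroup.one_closed[OF K] by (auto simp: dih_one)
  fix a assume a: "a \<in> {x\<in>H \<inter> K. \<not> snd x}"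
  then obtain k where k: "a = (k, False)" "k < n" using subgroup.subset[OF H]
    by (cases a) (auto simp: dih_carrier)
  have "inv\<^bsub>dihedral n\<^esub> a \<in> H" "inv\<^bsub>dihedral n\<^esub> a \<in> K"
    using a subgroup.m_inv_closed[OF H] subgroup.m_inv_closed[OF K] by auto
  moreover have "\<not> snd (inv\<^bsub>dihedral n\<^esub> a)" using k inv_rot by simp
  ultimately show "inv\<^bsub>dihedral n\<^esub> a \<in> {x\<in>H \<inter> K. \<not> snd x}" by simp
  fix b assume b: "b \<in> {x\<in>H \<inter> K. \<not> snd x}"
  then obtain l where l: "b = (l, False)" by (cases b) auto
  have "a \<otimes>\<^bsub>dihedral n\<^esub> b \<in> H" "a \<otimes>\<^bsub>dihedral n\<^esub> b \<in> K"
    using a b subgroup.m_closed[OF H] subgroup.m_closed[OF K] by auto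
  moreover have "\<not> snd (a \<otimes>\<^bsub>dihedral n\<^esub> b)" using k l by (simp add: dih_mult)
  ultimately show "a \<otimes>\<^bsub>dihedral n\<^esub> b \<in> {x\<in>H \<inter> K. \<not> snd x}" by simp
qed

lemma ext_sub:
  assumes R: "subgroup R (dihedral n)" and rot: "\<And>x. x \<in> R \<Longrightarrow> \<not> snd x"
  shows "subgroup {(a, b::bool). (a, False) \<in> R} (dihedral n)"
proof (rule G.subgroupI)
  have Rc: "R \<subseteq> {0..<n} \<times> UNIV" using subgroup.subset[OF R] by (simp add: dih_carrier)
  show "{(a, b::bool). (a, False) \<in> R} \<subseteq> carrier (dihedral n)" using Rc by (auto simp: dih_carrier)
  show "{(a, b::bool). (a, False) \<in> R} \<noteq> {}"
    using subgroup.one_closed[OF R] by (auto simp: dih_one)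
  fix x assume x: "x \<in> {(a, b::bool). (a, False) \<in> R}"
  then obtain a b where ab: "x = (a, b)" "(a, False) \<in> R" "a < n" using Rc by (cases x) auto
  show "inv\<^bsub>dihedral n\<^esub> x \<in> {(a, b::bool). (a, False) \<in> R}"
  proof (cases b)
    case True then show ?thesis using ab inv_refl by simp
  next
    case False then show ?thesis using ab inv_rot subgroup.m_inv_closed[OF R] by fastforce
  qed
  fix y assume y: "y \<in> {(a, b::bool). (a, False) \<in> R}"
  then obtain c d where cd: "y = (c, d)" "(c, False) \<in> R" "c < n" using Rc by (cases y) auto
  show "x \<otimes>\<^bsub>dihedral n\<^esub> y \<in> {(a, b::bool). (a, False) \<in> R}"
  proof (cases b)
    case False
    then have "(a, False) \<otimes>\<^bsub>dihedral n\<^esub> (c, False) \<in> R" using ab cd subgroup.m_closed[OF R] by blast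
    then show ?thesis using False ab cd by (simp add: dih_mult)
  next
    case True
    have "(a, False) \<otimes>\<^bsub>dihedral n\<^esub> inv\<^bsub>dihedral n\<^esub> (c, False) \<in> R"
      using ab cd subgroup.m_closed[OF R] subgroup.m_inv_closed[OF R] by blast
    moreover have "(a, False) \<otimes>\<^bsub>dihedral n\<^esub> inv\<^bsub>dihedral n\<^esub> (c, False) = (dm n True a c, False)"
      using cd inv_rot by (simp add: dih_mult dm_def mod_add_right_eq)
    ultimately show ?thesis using True ab cd by (simp add: dih_mult)
  qed
qed

lemma ord_rot_inter:
  assumes H: "subgroup H (dihedral n)" and K: "subgroup K (dihedral n)"
  shows "G.ord ` {x\<in>H \<inter> K. \<not> snd x} = G.ord ` {x\<in>H. \<not> snd x} \<inter> G.ord ` {x\<in>K. \<not> snd x}"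
proof (intro equalityI subsetI)
  fix z assume "z \<in> G.ord ` {x\<in>H \<inter> K. \<not> snd x}"
  then show "z \<in> G.ord ` {x\<in>H. \<not> snd x} \<inter> G.ord ` {x\<in>K. \<not> snd x}" by auto
next
  fix z assume "z \<in> G.ord ` {x\<in>H. \<not> snd x} \<inter> G.ord ` {x\<in>K. \<not> snd x}"
  then obtain x y where x: "x \<in> H" "\<not> snd x" "z = G.ord x" and y: "y \<in> K" "\<not> snd y" "z = G.ord y"
    by blast
  obtain a where a: "x = (a, False)" "a < n" using x subgroup.subset[OF H]
    by (cases x) (auto simp: dih_carrier)
  obtain b where b: "y = (b, False)" "b < n" using y subgroup.subset[OF K]
    by (cases y) (auto simp: dih_carrier)
  obtain j where "x = y [^]\<^bsub>dihedral n\<^esub> (j::nat)" using rot_unique[of a b] a b x y by auto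
  then have "x \<in> K" using sub_pow[OF K y(1)] by simp
  then show "z \<in> G.ord ` {x\<in>H \<inter> K. \<not> snd x}" using x by blast
qed

lemma inter_exists:
  assumes H: "subgroup H (dihedral n)" and K: "subgroup K (dihedral n)"
  shows "\<exists>L. subgroup L (dihedral n) \<and>
    elem_orders (dihedral n) L = elem_orders (dihedral n) H \<inter> elem_orders (dihedral n) K"
proof -
  define R where "R = {x\<in>H \<inter> K. \<not> snd x}"
  have Rs: "subgroup R (dihedral n)" using rot_sub[OF H K] R_def by simp
  have Rrot: "\<And>x. x \<in> R \<Longrightarrow> \<not> snd x" using R_def by auto
  have oR: "G.ord ` R = G.ord ` {x\<in>H. \<not> snd x} \<inter> G.ord ` {x\<in>K. \<not> snd x}"
    using ord_rot_inter[OF H K] R_def by simp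
  have R2: "{x\<in>R. \<not> snd x} = R" using Rrot by blast
  have R3: "\<not> (\<exists>x\<in>R. snd x)" using Rrot by blast
  have eR: "elem_orders (dihedral n) R = G.ord ` R"
    using eo_char[OF Rs] by (simp only: R2 R3 if_False Un_empty_right)
  have AH: "(if \<exists>x\<in>H. snd x then {2} else {}) \<subseteq> {2::nat}" by simp
  have AK: "(if \<exists>x\<in>K. snd x then {2} else {}) \<subseteq> {2::nat}" by simp
  show ?thesis
  proof (cases "2 \<in> elem_orders (dihedral n) H \<inter> elem_orders (dihedral n) K")
    case True
    define L where "L = {(a, b::bool). (a, False) \<in> R}"
    have Ls: "subgroup L (dihedral n)" using ext_sub[OF Rs Rrot] L_def by simp
    have LR: "{x\<in>L. \<not> snd x} = R"
    proof (intro equalityI subsetI)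
      fix x assume "x \<in> {x\<in>L. \<not> snd x}" then show "x \<in> R" using L_def by (cases x) simp
    next
      fix x assume "x \<in> R" then show "x \<in> {x\<in>L. \<not> snd x}" using L_def Rrot by (cases x) fastforce
    qed
    have "(0, True) \<in> L" using subgroup.one_closed[OF Rs] L_def by (simp add: dih_one)
    then have ex: "\<exists>x\<in>L. snd x" by force
    have "elem_orders (dihedral n) L = G.ord ` R \<union> {2}"
      using eo_char[OF Ls] by (simp only: LR ex if_True)
    also have "\<dots> = elem_orders (dihedral n) H \<inter> elem_orders (dihedral n) K"
      unfolding oR eo_char[OF H] eo_char[OF K]
      by (rule set_aux1[OF AH AK]) (use True in \<open>simp only: eo_char[OF H] eo_char[OF K]\<close>)
    finally show ?thesis using Ls by blast
  next
    case False
    have "elem_orders (dihedral n) H \<inter> elem_orders (dihedral n) K = G.ord ` R"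
      unfolding oR eo_char[OF H] eo_char[OF K]
      by (rule set_aux2[OF AH AK]) (use False in \<open>simp only: eo_char[OF H] eo_char[OF K] not_False_eq_True\<close>)
    then show ?thesis using Rs eR by auto
  qed
qed
end


theorem theorem2p5:
  fixes n :: nat
  assumes "n \<ge> 1"
  shows "lattice (Pi_tilde (dihedral n))"
  by (rule lattice_generic[OF dihedral_group[OF assms]])
     (auto simp: dih_carrier intro: inter_exists[OF assms])

end
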